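(* Let $n\in\mathbb{N}=\{0,1,2,\ldots\}$ and let $r\in\{3,4,5,\ldots\}$. Then $2^{-n}\,\det\big[f^{(r)}_{i+j}\big]_{0\le i,j\le n}$ is an odd integer. Furthermore, $6^{-n}\,\det\big[f_{i+j}\big]_{0\le i,j\le n}$ is a positive odd integer.
   Context: For $m\in\mathbb{N}$, the Franel numbers are $f_m=\sum_{k=0}^m\binom{m}{k}^3$, and for an integer $r\ge 3$ the $r$-th order Franel numbers are $f^{(r)}_m=\sum_{k=0}^m\binom{m}{k}^r$. For a sequence $(a_m)_{m\ge0}$, $\det[a_{i+j}]_{0\le i,j\le n}$ denotes the determinant of the $(n+1)\times(n+1)$ Hankel matrix with $(i,j)$-entry $a_{i+j}$. *)

theory Defs
  imports "Jordan_Normal_Form.Determinant"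
begin

definition franel_r :: "nat \<Rightarrow> nat \<Rightarrow> int" where
  "franel_r r m = (\<Sum>k=0..m. int (m choose k) ^ r)"

definition franel :: "nat \<Rightarrow> int" where
  "franel m = (\<Sum>k=0..m. int (m choose k) ^ 3)"

definition hankel_det :: "(nat \<Rightarrow> int) \<Rightarrow> nat \<Rightarrow> int" where
  "hankel_det a n = det (mat (n+1) (n+1) (\<lambda>(i,j). a (i+j)))"

end

theory Submission
  imports Defs
begin

lemma sym_sum:
  fixes h :: "nat \<Rightarrow> int"
  assumes sym: "\<And>k. k \<le> j \<Longrightarrow> h k = h (j - k)"
  shows "(\<Sum>k\<le>j. h k) = 2 * (\<Sum>k\<in>{k. 2*k < j}. h k) + (if even j then h (j div 2) else 0)"
proof -
  let ?L = "{k. 2*k < j}" and ?M = "{k. 2*k = j}" and ?U = "{k. j < 2*k \<and> k \<le> j}"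
  have fin: "finite ?L" "finite ?M" "finite ?U"
    by (rule finite_subset[of _ "{..j}"]; auto)+
  have eq: "{..j} = ?L \<union> ?M \<union> ?U" by auto
  have "(\<Sum>k\<le>j. h k) = (\<Sum>k\<in>?L \<union> ?M \<union> ?U. h k)" using eq by simp
  also have "\<dots> = (\<Sum>k\<in>?L \<union> ?M. h k) + (\<Sum>k\<in>?U. h k)"
    by (rule sum.union_disjoint) (use fin in auto)
  also have "(\<Sum>k\<in>?L \<union> ?M. h k) = (\<Sum>k\<in>?L. h k) + (\<Sum>k\<in>?M. h k)"
    by (rule sum.union_disjoint) (use fin in auto)
  also have "(\<Sum>k\<in>?U. h k) = (\<Sum>k\<in>?L. h k)"
    by (rule sum.reindex_bij_witness[of _ "\<lambda>k. j - k" "\<lambda>k. j - k"]) (auto intro: sym[symmetric] sym)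
  also have "(\<Sum>k\<in>?M. h k) = (if even j then h (j div 2) else 0)"
  proof (cases "even j")
    case True
    hence "?M = {j div 2}" by auto
    thus ?thesis using True by simp
  next
    case False
    hence "?M = {}" by auto
    thus ?thesis using False by simp
  qed
  finally show ?thesis by simp
qed

lemma choose_double_mod2:
  "int ((2*m) choose j) mod 2 = (if even j then int (m choose (j div 2)) mod 2 else 0)"
proof -
  have "int ((2*m) choose j) = int (\<Sum>k\<le>j. (m choose k) * (m choose (j - k)))"
    using vandermonde[of m m j] by (simp add: mult_2)
  also have "\<dots> = (\<Sum>k\<le>j. int ((m choose k) * (m choose (j - k))))"
    by (simp only: of_nat_sum)
  also have "\<dots> = 2 * (\<Sum>k\<in>{k. 2*k < j}. int ((m choose k) * (m choose (j - k))))
      + (if even j then int ((m choose (j div 2)) * (m choose (j - j div 2))) else 0)"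
    by (rule sym_sum) (simp add: mult.commute)
  finally have e: "int ((2*m) choose j) = \<dots>" .
  show ?thesis
  proof (cases "even j")
    case True
    hence jj: "j - j div 2 = j div 2" by auto
    have "int ((2*m) choose j) mod 2 = (int (m choose (j div 2)) * int (m choose (j div 2))) mod 2"
      using True by (subst e) (simp add: jj)
    also have "\<dots> = int (m choose (j div 2)) mod 2"
      using mod2_eq_if[of "int (m choose (j div 2)) * int (m choose (j div 2))"] mod2_eq_if[of "int (m choose (j div 2))"]
      by simp
    finally show ?thesis using True by simp
  next
    case False
    thus ?thesis by (subst e) simp
  qed
qed

definition Nodd :: "nat \<Rightarrow> int" where
  "Nodd m = (\<Sum>k\<le>m. int (m choose k) mod 2)"

lemma cd_even: "int ((2*m) choose (2*i)) mod 2 = int (m choose i) mod 2"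
  using choose_double_mod2[of m "2*i"] by simp

lemma cd_odd: "int ((2*m) choose (Suc (2*i))) mod 2 = 0"
  using choose_double_mod2[of m "Suc (2*i)"] by simp

lemma Nodd_even: "Nodd (2*m) = Nodd m"
proof -
  have "Nodd (2*m) = (\<Sum>k\<le>Suc (2*m). int ((2*m) choose k) mod 2)"
    unfolding Nodd_def by (simp add: binomial_eq_0)
  also have "\<dots> = (\<Sum>i\<le>m. int ((2*m) choose (2*i)) mod 2 + int ((2*m) choose (Suc (2*i))) mod 2)"
    by (rule sum.in_pairs_0)
  also have "\<dots> = (\<Sum>i\<le>m. int (m choose i) mod 2)"
    by (intro sum.cong refl) (metis cd_even cd_odd add.right_neutral)
  finally show ?thesis unfolding Nodd_def .
qed

lemma Nodd_odd: "Nodd (Suc (2*m)) = 2 * Nodd m"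
proof -
  have A: "int (Suc (2*m) choose (2*i)) mod 2 = int (m choose i) mod 2" for i
  proof (cases i)
    case 0 thus ?thesis by simp
  next
    case (Suc i')
    have "int (Suc (2*m) choose (2*i)) = int ((2*m) choose (Suc (2*i'))) + int ((2*m) choose (2*i))"
      using Suc by (simp add: binomial_Suc_Suc)
    hence "int (Suc (2*m) choose (2*i)) mod 2 = (int ((2*m) choose (Suc (2*i'))) mod 2 + int ((2*m) choose (2*i)) mod 2) mod 2"
      by (simp add: mod_add_eq)
    also have "\<dots> = int (m choose i) mod 2" by (metis cd_even cd_odd add.right_neutral add.left_neutral mod_mod_trivial)
    finally show ?thesis .
  qed
  have B: "int (Suc (2*m) choose Suc (2*i)) mod 2 = int (m choose i) mod 2" for i
  proof -
    have "int (Suc (2*m) choose Suc (2*i)) = int ((2*m) choose (2*i)) + int ((2*m) choose (Suc (2*i)))"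
      by (simp add: binomial_Suc_Suc)
    hence "int (Suc (2*m) choose Suc (2*i)) mod 2 = (int ((2*m) choose (2*i)) mod 2 + int ((2*m) choose (Suc (2*i))) mod 2) mod 2"
      by (simp add: mod_add_eq)
    also have "\<dots> = int (m choose i) mod 2" by (metis cd_even cd_odd add.right_neutral add.left_neutral mod_mod_trivial)
    finally show ?thesis .
  qed
  have "Nodd (Suc (2*m)) = (\<Sum>i\<le>m. int (Suc (2*m) choose (2*i)) mod 2 + int (Suc (2*m) choose (Suc (2*i))) mod 2)"
    unfolding Nodd_def by (rule sum.in_pairs_0)
  also have "\<dots> = (\<Sum>i\<le>m. 2 * (int (m choose i) mod 2))"
    by (intro sum.cong refl) (metis A B mult_2)
  finally show ?thesis unfolding Nodd_def by (simp add: sum_distrib_left)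
qed

definition pow2 :: "nat \<Rightarrow> bool" where "pow2 m \<longleftrightarrow> (\<exists>k. m = 2^k)"

lemma pow2_double: "pow2 (2*t) \<longleftrightarrow> pow2 t"
proof
  assume "pow2 (2*t)"
  then obtain k where k: "2*t = 2^k" by (auto simp: pow2_def)
  show "pow2 t"
  proof (cases k)
    case 0 thus ?thesis using k by simp
  next
    case (Suc k') thus ?thesis using k by (auto simp: pow2_def)
  qed
next
  assume "pow2 t" thus "pow2 (2*t)" by (auto simp: pow2_def intro: exI[of _ "Suc _"])
qed

lemma pow2_odd: "pow2 (Suc (2*t)) \<longleftrightarrow> t = 0"
proof
  assume "pow2 (Suc (2*t))"
  then obtain k where k: "Suc (2*t) = 2^k" by (auto simp: pow2_def)
  show "t = 0"
  proof (cases k)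
    case 0 thus ?thesis using k by simp
  next
    case (Suc k')
    hence "Suc (2*t) = 2 * 2^k'" using k by simp
    thus ?thesis by presburger
  qed
next
  assume "t = 0" thus "pow2 (Suc (2*t))" by (auto simp: pow2_def intro: exI[of _ 0])
qed

lemma Nodd_mod4: "m \<ge> 1 \<Longrightarrow> Nodd m mod 4 = (if pow2 m then 2 else 0)"
proof (induction m rule: less_induct)
  case (less m)
  have "m = 2*(m div 2) \<or> m = Suc (2*(m div 2))" by presburger
  then obtain t where "m = 2*t \<or> m = Suc (2*t)" by blast
  then show ?case
  proof
    assume m: "m = 2*t"
    hence t: "t \<ge> 1" "t < m" using less.prems by auto
    show ?thesis using less.IH[OF t(2) t(1)] by (simp add: m Nodd_even pow2_double)
  next
    assume m: "m = Suc (2*t)"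
    show ?thesis
    proof (cases "t = 0")
      case True thus ?thesis using m by (auto simp: Nodd_def pow2_def intro!: exI[of _ 0])
    next
      case False
      hence t: "t \<ge> 1" "t < m" using m by auto
      have "Nodd t mod 4 = 0 \<or> Nodd t mod 4 = 2" using less.IH[OF t(2) t(1)] by auto
      hence "(2::int) dvd Nodd t mod 4" by auto
      hence "(2::int) dvd Nodd t" by (rule dvd_mod_imp_dvd) simp
      then obtain c where "Nodd t = 2 * c" by blast
      hence "2 * Nodd t mod 4 = 0" by simp
      thus ?thesis using m False by (simp add: Nodd_odd pow2_odd)
    qed
  qed
qed

lemma central_even: assumes "t \<ge> 1" shows "even ((2*t) choose t)"
proof -
  obtain s where t: "t = Suc s" using assms by (cases t) auto
  have "(2*t) choose t = (Suc (2*s) choose s) + (Suc (2*s) choose Suc s)"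
    by (simp add: t binomial_Suc_Suc)
  also have "Suc (2*s) choose Suc s = Suc (2*s) choose s"
    using binomial_symmetric[of "Suc s" "Suc (2*s)"] by simp
  finally show ?thesis by simp
qed

lemma g_even: assumes "r \<ge> 1" shows "even (int c ^ r - int c mod 2)"
proof (cases "even c")
  case True
  hence "even (int c ^ r)" using assms by simp
  moreover have "int c mod 2 = 0" using True by presburger
  ultimately show ?thesis by simp
next
  case False
  hence "odd (int c ^ r)" by simp
  moreover have "int c mod 2 = 1" using False by presburger
  ultimately show ?thesis by simp
qed

lemma franel_r_0: "franel_r r 0 = 1" by (simp add: franel_r_def)

lemma franel_r_mod4:
  assumes r: "r \<ge> 2" and m: "m \<ge> 1"
  shows "franel_r r m mod 4 = (if pow2 m then 2 else 0)"
proof -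
  define g where "g k = int (m choose k) ^ r - int (m choose k) mod 2" for k
  have gsum: "(\<Sum>k\<le>m. g k) = franel_r r m - Nodd m"
    by (simp add: g_def franel_r_def Nodd_def atLeast0AtMost sum_subtractf)
  have gsym: "g k = g (m - k)" if "k \<le> m" for k
    using binomial_symmetric[OF that] by (simp add: g_def)
  have ge: "even (g k)" for k unfolding g_def by (rule g_even) (use r in simp)
  have "(\<Sum>k\<le>m. g k) = 2 * (\<Sum>k\<in>{k. 2*k < m}. g k) + (if even m then g (m div 2) else 0)"
    by (rule sym_sum) (rule gsym)
  moreover have "4 dvd 2 * (\<Sum>k\<in>{k. 2*k < m}. g k)"
  proof -
    have "2 dvd (\<Sum>k\<in>{k. 2*k < m}. g k)" by (rule dvd_sum) (simp add: ge)
    thus ?thesis by (auto elim!: dvdE)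
  qed
  moreover have "4 dvd (if even m then g (m div 2) else 0)"
  proof (cases "even m")
    case True
    have m2: "m div 2 \<ge> 1" "2 * (m div 2) = m" using m True by auto
    have "even ((2 * (m div 2)) choose (m div 2))" by (rule central_even[OF m2(1)])
    hence ev: "even (int (m choose (m div 2)))" using m2(2) by simp
    then obtain c where c: "int (m choose (m div 2)) = 2 * c" by (rule evenE)
    have "int (m choose (m div 2)) ^ r = 4 * (c^2 * (2*c) ^ (r - 2))"
    proof -
      have "int (m choose (m div 2)) ^ r = (2*c) ^ (2 + (r - 2))" by (subst le_add_diff_inverse[OF r]) (simp only: c)
      also have "\<dots> = (2*c) ^ 2 * (2*c) ^ (r-2)" by (rule power_add)
      also have "\<dots> = 4 * (c^2 * (2*c) ^ (r - 2))" by (simp add: power2_eq_square)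
      finally show ?thesis .
    qed
    moreover have "int (m choose (m div 2)) mod 2 = 0" using c by simp
    ultimately show ?thesis using True by (simp add: g_def)
  qed (simp)
  ultimately have "4 dvd (\<Sum>k\<le>m. g k)" by (simp add: dvd_add)
  hence "4 dvd franel_r r m - Nodd m" using gsum by simp
  hence "franel_r r m mod 4 = Nodd m mod 4" by (simp add: mod_eq_dvd_iff)
  thus ?thesis using Nodd_mod4[OF m] by simp
qed

lemma hankel_factor:
  fixes a x :: "nat \<Rightarrow> int" and d :: int
  assumes dv: "\<And>i j. i \<ge> 1 \<Longrightarrow> d dvd a (i+j) - x i * a j"
  shows "hankel_det a n = d ^ n * det (mat (Suc n) (Suc n) (\<lambda>(i,j). if i = 0 then a j else (a (i+j) - x i * a j) div d))"
proof -
  define N where "N = Suc n"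
  define A' where "A' = mat N N (\<lambda>(i,j). if i = 0 then a j else (a (i+j) - x i * a j) div d)"
  define D where "D = mat N N (\<lambda>(i,j). if i = j then (if i = 0 then 1 else d) else (0::int))"
  define C where "C = mat N N (\<lambda>(i,j). if i = 0 then a j else a (i+j) - x i * a j)"
  define L where "L = mat N N (\<lambda>(i,j). if i = j then 1 else if j = 0 then x i else (0::int))"
  define H where "H = mat N N (\<lambda>(i,j). a (i+j))"
  have car: "A' \<in> carrier_mat N N" "D \<in> carrier_mat N N" "C \<in> carrier_mat N N" "L \<in> carrier_mat N N"
    by (auto simp: A'_def D_def C_def L_def)
  have CD: "C = D * A'"
  proof (rule eq_matI)
    fix i j assume ij: "i < dim_row (D*A')" "j < dim_col (D*A')"
    hence i: "i < N" and j: "j < N" by (auto simp: D_def A'_def)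
    have "(D * A') $$ (i,j) = (\<Sum>k\<in>{0..<N}. D $$ (i,k) * A' $$ (k,j))"
      using i j by (simp add: D_def A'_def scalar_prod_def)
    also have "\<dots> = (\<Sum>k\<in>{0..<N}. if k = i then D $$ (i,i) * A' $$ (i,j) else 0)"
      by (rule sum.cong) (auto simp: D_def i)
    also have "\<dots> = D $$ (i,i) * A' $$ (i,j)" using i by simp
    also have "\<dots> = C $$ (i,j)"
    proof (cases "i = 0")
      case True thus ?thesis using i j by (simp add: D_def A'_def C_def)
    next
      case False
      hence "d dvd a (i+j) - x i * a j" using dv[of i j] by simp
      thus ?thesis using i j False by (simp add: D_def A'_def C_def)
    qed
    finally show "C $$ (i,j) = (D * A') $$ (i,j)" by simp
  qed (auto simp: C_def D_def A'_def)
  have HL: "H = L * C"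
  proof (rule eq_matI)
    fix i j assume ij: "i < dim_row (L*C)" "j < dim_col (L*C)"
    hence i: "i < N" and j: "j < N" by (auto simp: L_def C_def)
    have "(L * C) $$ (i,j) = (\<Sum>k\<in>{0..<N}. L $$ (i,k) * C $$ (k,j))"
      using i j by (simp add: L_def C_def scalar_prod_def)
    also have "\<dots> = (\<Sum>k\<in>{0..<N}. (if k = i then C $$ (i,j) else 0) + (if k = 0 \<and> i \<noteq> 0 then x i * C $$ (0,j) else 0))"
      by (rule sum.cong) (auto simp: L_def i)
    also have "\<dots> = C $$ (i,j) + (if i \<noteq> 0 then x i * C $$ (0,j) else 0)"
      using i by (simp add: sum.distrib N_def)
    also have "\<dots> = H $$ (i,j)" using i j by (simp add: C_def H_def)
    finally show "H $$ (i,j) = (L * C) $$ (i,j)" by simp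
  qed (auto simp: H_def L_def C_def)
  have detL: "det L = 1"
  proof -
    have "det L = prod_list (diag_mat L)"
      by (rule det_lower_triangular[of N]) (auto simp: L_def)
    also have "\<dots> = (\<Prod>i = 0..<N. L $$ (i,i))" using car by (simp add: prod_list_diag_prod)
    also have "\<dots> = 1" by (rule prod.neutral) (simp add: L_def)
    finally show ?thesis .
  qed
  have detD: "det D = d ^ n"
  proof -
    have "det D = prod_list (diag_mat D)"
      by (rule det_lower_triangular[of N]) (auto simp: D_def)
    also have "\<dots> = (\<Prod>i = 0..<N. D $$ (i,i))" using car by (simp add: prod_list_diag_prod)
    also have "\<dots> = (\<Prod>i = 0..<N. if i = 0 then 1 else d)" by (rule prod.cong) (auto simp: D_def)
    also have "\<dots> = (\<Prod>i = 0..<n. d)" unfolding N_def by (subst prod.atLeast0_lessThan_Suc_shift) simp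
    also have "\<dots> = d ^ n" by simp
    finally show ?thesis .
  qed
  have "hankel_det a n = det H" by (simp add: hankel_det_def H_def N_def)
  also have "\<dots> = det L * det (D * A')" using HL CD car by (simp add: det_mult[of _ N])
  also have "\<dots> = d ^ n * det A'" using car by (simp add: det_mult[of _ N] detL detD)
  finally show ?thesis by (simp add: A'_def N_def)
qed

definition validp :: "nat \<Rightarrow> (nat \<Rightarrow> nat) \<Rightarrow> bool" where
  "validp n p \<longleftrightarrow> inj_on p {1..n} \<and> (\<forall>i\<in>{1..n}. p i \<in> {1..n} \<and> pow2 (i + p i))"

lemma pow_ivl: "(n::nat) \<ge> 1 \<Longrightarrow> \<exists>e. 2^e \<le> n \<and> n < 2^(Suc e)"
proof (induction n rule: less_induct)
  case (less n)
  show ?case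
  proof (cases "n = 1")
    case True thus ?thesis by (intro exI[of _ 0]) simp
  next
    case False
    hence "n div 2 \<ge> 1" "n div 2 < n" using less.prems by auto
    then obtain e where e: "2^e \<le> n div 2" "n div 2 < 2^(Suc e)" using less.IH by blast
    show ?thesis by (rule exI[of _ "Suc e"]) (use e in auto)
  qed
qed

lemma pow2_between: "pow2 x \<Longrightarrow> 2^e < x \<Longrightarrow> x < 2^(Suc (Suc e)) \<Longrightarrow> x = 2^(Suc e)"
proof -
  assume "pow2 x" "2^e < x" "x < 2^(Suc (Suc e))"
  then obtain k where k: "x = 2^k" "(2::nat)^e < 2^k" "(2::nat)^k < 2^(Suc (Suc e))"
    by (auto simp: pow2_def)
  have "e < k" by (rule power_less_imp_less_exp[OF _ k(2)]) simp
  moreover have "k < Suc (Suc e)" by (rule power_less_imp_less_exp[OF _ k(3)]) simp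
  ultimately have "e < k" "k < Suc (Suc e)" by auto
  hence "k = Suc e" by simp
  thus ?thesis using k by simp
qed

lemma pow2_not_between: "pow2 x \<Longrightarrow> 2^e < x \<Longrightarrow> x < 2^(Suc e) \<Longrightarrow> False"
proof -
  assume "pow2 x" "2^e < x" "x < 2^(Suc e)"
  then obtain k where k: "x = 2^k" "(2::nat)^e < 2^k" "(2::nat)^k < 2^(Suc e)"
    by (auto simp: pow2_def)
  have "e < k" by (rule power_less_imp_less_exp[OF _ k(2)]) simp
  moreover have "k < Suc e" by (rule power_less_imp_less_exp[OF _ k(3)]) simp
  ultimately have "e < k" "k < Suc e" by auto
  thus False by simp
qed

lemma validp_surj: "validp n p \<Longrightarrow> p ` {1..n} = {1..n}"
  by (rule endo_inj_surj) (auto simp: validp_def)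

lemma forced:
  assumes v: "validp n p" and e1: "2^e \<le> n" and e2: "n < 2^(Suc e)"
  and i: "2^(Suc e) - n \<le> i" "i \<le> n"
  shows "p i = 2^(Suc e) - i"
proof -
  define P where "P = (2::nat)^(Suc e)"
  define h where "h = (2::nat)^e"
  have Ph: "P = 2*h" by (simp add: P_def h_def)
  have h1: "h \<ge> 1" by (simp add: h_def)
  have K: "i' + j = P" if "i' \<in> {1..n}" "j \<in> {1..n}" "pow2 (i'+j)" "h < i' \<or> h < j" for i' j
  proof -
    have "2^e < i' + j" using that by (auto simp: h_def)
    moreover have "i' + j < 2^(Suc (Suc e))" using that e2 by auto
    ultimately show ?thesis using pow2_between[OF that(3)] by (simp add: P_def)
  qed
  have vi: "\<And>i. i \<in> {1..n} \<Longrightarrow> p i \<in> {1..n} \<and> pow2 (i + p i)" using v by (auto simp: validp_def)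
  have inj: "inj_on p {1..n}" using v by (auto simp: validp_def)
  have c1: "p i' = P - i'" if "h < i'" "i' \<le> n" for i'
  proof -
    have "i' \<in> {1..n}" using that h1 by auto
    from K[OF this conjunct1[OF vi[OF this]] conjunct2[OF vi[OF this]]] that show ?thesis by simp
  qed
  have c2: "p i' = P - i'" if "P - n \<le> i'" "i' < h" for i'
  proof -
    have jn: "P - i' \<in> {1..n}" "h < P - i'" using that e1 e2 by (auto simp: P_def h_def)
    then obtain k where k: "k \<in> {1..n}" "p k = P - i'" using validp_surj[OF v] by (metis imageE)
    have "k + (P - i') = P" using K[OF k(1) jn(1)] vi[OF k(1)] k(2) jn(2) by auto
    hence "k = i'" using that Ph by auto
    thus ?thesis using k by simp
  qed
  show ?thesis
  proof (cases "h < i")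
    case True thus ?thesis using c1 i by (simp add: P_def)
  next
    case False
    show ?thesis
    proof (cases "i < h")
      case True thus ?thesis using c2 i by (simp add: P_def)
    next
      case False2: False
      hence ih: "i = h" using False by simp
      have hn: "h \<in> {1..n}" using e1 h1 by (auto simp: h_def)
      define j where "j = p h"
      have j: "j \<in> {1..n}" "pow2 (h + j)" using vi[OF hn] by (auto simp: j_def)
      have "j = h"
      proof (rule ccontr)
        assume jh: "j \<noteq> h"
        show False
        proof (cases "h < j")
          case True
          have "P - n \<le> P - j" "P - j < h" using j True Ph h1 by auto
          hence "p (P - j) = P - (P - j)" by (rule c2)
          moreover have "j \<le> P" using j e2 by (simp add: P_def)
          ultimately have "p (P - j) = p h" by (simp add: j_def)
          moreover have "P - j \<in> {1..n}" "P - j \<noteq> h" using j True Ph e2 \<open>P - n \<le> P - j\<close> by (auto simp: P_def)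
          ultimately show False using inj_onD[OF inj _ _ hn] by blast
        next
          case False
          hence "j < h" using jh by simp
          have "2^e < h + j" using j by (auto simp: h_def)
          moreover have "h + j < 2^(Suc e)" using \<open>j < h\<close> by (simp add: h_def)
          ultimately show False using pow2_not_between j(2) by blast
        qed
      qed
      thus ?thesis using ih Ph by (simp add: j_def h_def)
    qed
  qed
qed

lemma validp_unique: "validp n p \<Longrightarrow> validp n q \<Longrightarrow> i \<in> {1..n} \<Longrightarrow> p i = q i"
proof (induction n arbitrary: i rule: less_induct)
  case (less n)
  hence n1: "n \<ge> 1" by auto
  obtain e where e: "2^e \<le> n" "n < 2^(Suc e)" using pow_ivl[OF n1] by blast
  define P where "P = (2::nat)^(Suc e)"
  have Pn: "P \<le> 2*n" "n < P" using e by (auto simp: P_def)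
  show ?case
  proof (cases "P - n \<le> i")
    case True
    thus ?thesis using forced[OF less.prems(1) e] forced[OF less.prems(2) e] less.prems(3)
      by (simp add: P_def)
  next
    case False
    define n' where "n' = P - n - 1"
    have n'n: "n' < n" using Pn n1 by (auto simp: n'_def)
    have restr: "validp n' r" if vr: "validp n r" for r
    proof -
      have inj: "inj_on r {1..n}" using vr by (auto simp: validp_def)
      have vi: "\<And>i. i \<in> {1..n} \<Longrightarrow> r i \<in> {1..n} \<and> pow2 (i + r i)" using vr by (auto simp: validp_def)
      have f: "r s = P - s" if "P - n \<le> s" "s \<le> n" for s
        using forced[OF vr e] that by (simp add: P_def)
      show ?thesis unfolding validp_def
      proof (intro conjI ballI)
        show "inj_on r {1..n'}" by (rule inj_on_subset[OF inj]) (use n'n in auto)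
      next
        fix i assume i: "i \<in> {1..n'}"
        hence i2: "i \<in> {1..n}" using n'n by auto
        have ri: "r i \<in> {1..n}" "pow2 (i + r i)" using vi[OF i2] by auto
        have "r i \<le> n'"
        proof (rule ccontr)
          assume "\<not> r i \<le> n'"
          hence s: "P - n \<le> r i" using n'_def Pn by auto
          have "P - r i \<in> {1..n}" "P - n \<le> P - r i" "P - r i \<le> n" using ri s Pn by auto
          hence "r (P - r i) = r i" using f[of "P - r i"] ri s Pn by auto
          hence "P - r i = i" using inj_onD[OF inj _ _ i2] \<open>P - r i \<in> {1..n}\<close> by blast
          thus False using i s n'_def Pn ri by auto
        qed
        thus "r i \<in> {1..n'}" using ri by auto
        show "pow2 (i + r i)" by (rule ri(2))
      qed
    qed
    have "i \<in> {1..n'}" using False less.prems(3) by (auto simp: n'_def)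
    thus ?thesis using less.IH[OF n'n restr[OF less.prems(1)] restr[OF less.prems(2)]] by blast
  qed
qed

lemma validp_exists: "\<exists>p. validp n p"
proof (induction n rule: less_induct)
  case (less n)
  show ?case
  proof (cases "n = 0")
    case True thus ?thesis by (auto simp: validp_def)
  next
    case False
    hence n1: "n \<ge> 1" by simp
    obtain e where e: "2^e \<le> n" "n < 2^(Suc e)" using pow_ivl[OF n1] by blast
    define P where "P = (2::nat)^(Suc e)"
    have Pn: "P \<le> 2*n" "n < P" using e by (auto simp: P_def)
    define n' where "n' = P - n - 1"
    have n'n: "n' < n" using Pn n1 by (auto simp: n'_def)
    obtain p' where p': "validp n' p'" using less.IH[OF n'n] by blast
    define p where "p i = (if P - n \<le> i then P - i else p' i)" for i
    have "validp n p" unfolding validp_def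
    proof (rule conjI[rotated], rule ballI)
      fix i assume i: "i \<in> {1..n}"
      show "p i \<in> {1..n} \<and> pow2 (i + p i)"
      proof (cases "P - n \<le> i")
        case True thus ?thesis using i Pn by (auto simp: p_def pow2_def P_def intro!: exI[of _ "Suc e"])
      next
        case False
        hence "i \<in> {1..n'}" using i by (auto simp: n'_def)
        hence "p' i \<in> {1..n'} \<and> pow2 (i + p' i)" using p' by (auto simp: validp_def)
        thus ?thesis using False n'n by (auto simp: p_def)
      qed
    next
      show "inj_on p {1..n}"
      proof (rule inj_onI)
        fix i1 i2 assume i: "i1 \<in> {1..n}" "i2 \<in> {1..n}" "p i1 = p i2"
        have lo: "p' k \<le> n'" if "k \<in> {1..n'}" for k using p' that by (auto simp: validp_def)
        show "i1 = i2"
        proof (cases "P - n \<le> i1"; cases "P - n \<le> i2")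
          assume "P - n \<le> i1" "P - n \<le> i2" thus ?thesis using i Pn by (auto simp: p_def)
        next
          assume a: "P - n \<le> i1" "\<not> P - n \<le> i2"
          hence "i2 \<in> {1..n'}" using i by (auto simp: n'_def)
          thus ?thesis using lo[of i2] a i Pn by (auto simp: p_def n'_def)
        next
          assume a: "\<not> P - n \<le> i1" "P - n \<le> i2"
          hence "i1 \<in> {1..n'}" using i by (auto simp: n'_def)
          thus ?thesis using lo[of i1] a i Pn by (auto simp: p_def n'_def)
        next
          assume a: "\<not> P - n \<le> i1" "\<not> P - n \<le> i2"
          hence "i1 \<in> {1..n'}" "i2 \<in> {1..n'}" using i by (auto simp: n'_def)
          thus ?thesis using p' a i by (auto simp: p_def validp_def dest: inj_onD)
        qed
      qed
    qed
    thus ?thesis by blast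
  qed
qed

lemma det_pattern_odd:
  fixes B :: "int mat"
  assumes B: "B \<in> carrier_mat (Suc n) (Suc n)"
  and row0: "\<And>j. j \<le> n \<Longrightarrow> B $$ (0,j) = (if j = 0 then 1 else 0)"
  and rest: "\<And>i j. 1 \<le> i \<Longrightarrow> i \<le> n \<Longrightarrow> 1 \<le> j \<Longrightarrow> j \<le> n \<Longrightarrow> B $$ (i,j) = (if pow2 (i+j) then 1 else 0)"
  shows "odd (det B)"
proof -
  let ?U = "{0..<Suc n}"
  let ?PU = "{p. p permutes ?U}"
  let ?pp = "\<lambda>p. signof p * (\<Prod>i = 0..<Suc n. B $$ (i, p i))"
  obtain p0 where p0: "validp n p0" using validp_exists by blast
  define Q where "Q i = (if 1 \<le> i \<and> i \<le> n then p0 i else i)" for i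
  have p0i: "\<And>i. i \<in> {1..n} \<Longrightarrow> p0 i \<in> {1..n} \<and> pow2 (i + p0 i)" using p0 by (auto simp: validp_def)
  have injQ: "inj_on Q ?U"
  proof (rule inj_onI)
    fix x y assume xy: "x \<in> ?U" "y \<in> ?U" "Q x = Q y"
    show "x = y"
    proof (cases "x = 0"; cases "y = 0")
      assume "x \<noteq> 0" "y \<noteq> 0"
      hence "x \<in> {1..n}" "y \<in> {1..n}" using xy by auto
      thus ?thesis using xy p0 by (auto simp: Q_def validp_def dest: inj_onD)
    next
      assume a: "x = 0" "y \<noteq> 0"
      hence "y \<in> {1..n}" using xy by auto
      thus ?thesis using xy a p0i[of y] by (auto simp: Q_def)
    next
      assume a: "x \<noteq> 0" "y = 0"
      hence "x \<in> {1..n}" using xy by auto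
      thus ?thesis using xy a p0i[of x] by (auto simp: Q_def)
    qed simp
  qed
  have QU: "Q ` ?U \<subseteq> ?U"
  proof
    fix y assume "y \<in> Q ` ?U"
    then obtain x where x: "x \<in> ?U" "y = Q x" by blast
    show "y \<in> ?U" using x p0i[of x] by (cases "x = 0") (auto simp: Q_def)
  qed
  have Qperm: "Q permutes ?U"
  proof (rule bij_imp_permutes)
    show "bij_betw Q ?U ?U" unfolding bij_betw_def using injQ endo_inj_surj[OF _ QU injQ] by simp
  next
    fix x assume "x \<notin> ?U" thus "Q x = x" by (auto simp: Q_def)
  qed
  have prodQ: "(\<Prod>i = 0..<Suc n. B $$ (i, Q i)) = 1"
  proof (rule prod.neutral, rule ballI)
    fix i assume i: "i \<in> ?U"
    show "B $$ (i, Q i) = 1"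
    proof (cases "i = 0")
      case True thus ?thesis using row0[of 0] by (simp add: Q_def)
    next
      case False
      hence "i \<in> {1..n}" using i by auto
      thus ?thesis using p0i[of i] rest[of i "p0 i"] by (auto simp: Q_def)
    qed
  qed
  have other: "?pp p = 0" if p: "p \<in> ?PU - {Q}" for p
  proof (rule ccontr)
    assume nz: "?pp p \<noteq> 0"
    have pp: "p permutes ?U" and pQ: "p \<noteq> Q" using p by auto
    have np: "(\<Prod>i\<in>?U. B $$ (i, p i)) \<noteq> 0" using nz by auto
    have nz2: "B $$ (i, p i) \<noteq> 0" if "i \<in> ?U" for i
      using np that by (metis finite_atLeastLessThan prod_zero_iff)
    have pin: "p i \<in> ?U" if "i \<in> ?U" for i using permutes_in_image[OF pp] that by simp
    have p00: "p 0 = 0"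
    proof (rule ccontr)
      assume "p 0 \<noteq> 0"
      moreover have "p 0 \<le> n" using pin[of 0] by auto
      ultimately show False using nz2[of 0] row0[of "p 0"] by auto
    qed
    have injp: "inj_on p ?U" using permutes_inj_on[OF pp] .
    have pi: "p i \<in> {1..n} \<and> pow2 (i + p i)" if i: "i \<in> {1..n}" for i
    proof -
      have "p i \<noteq> 0"
      proof
        assume "p i = 0"
        hence "p i = p 0" using p00 by simp
        hence "i = 0" using inj_onD[OF injp] i by auto
        thus False using i by auto
      qed
      moreover have "p i \<le> n" using pin[of i] i by auto
      ultimately have "p i \<in> {1..n}" by auto
      moreover have "B $$ (i, p i) \<noteq> 0" using nz2[of i] i by auto
      ultimately show ?thesis using rest[of i "p i"] i by (auto split: if_splits)
    qed
    have "inj_on p {1..n}" by (rule inj_on_subset[OF injp]) auto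
    hence vp: "validp n p" unfolding validp_def using pi by auto
    have "p = Q"
    proof
      fix i
      show "p i = Q i"
      proof (cases "i \<in> {1..n}")
        case True thus ?thesis using validp_unique[OF vp p0 True] by (simp add: Q_def)
      next
        case False
        show ?thesis
        proof (cases "i = 0")
          case True thus ?thesis using p00 by (simp add: Q_def)
        next
          case False2: False
          hence "i \<notin> ?U" using False by auto
          thus ?thesis using permutes_not_in[OF pp] by (simp add: Q_def)
        qed
      qed
    qed
    thus False using pQ by simp
  qed
  have fPU: "finite ?PU" by (rule finite_permutations) simp
  have "det B = (\<Sum>p\<in>?PU. ?pp p)" using det_def'[OF B] by simp
  also have "\<dots> = ?pp Q + (\<Sum>p\<in>?PU - {Q}. ?pp p)"
    by (rule sum.remove) (use fPU Qperm in auto)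
  also have "(\<Sum>p\<in>?PU - {Q}. ?pp p) = 0" by (rule sum.neutral) (use other in blast)
  finally have "det B = signof Q" using prodQ by simp
  thus ?thesis by (simp add: sign_def)
qed

lemma div_parity:
  fixes d y :: int
  assumes d4: "d mod 4 = 2" and dv: "d dvd y"
  shows "(y div d) mod 2 = (y mod 4) div 2"
proof -
  obtain q where q: "y = d * q" using dv by blast
  have d: "d = 4 * (d div 4) + 2" using d4 div_mult_mod_eq[of d 4] by simp
  have dnz: "d \<noteq> 0" using d4 by auto
  have yq: "y div d = q" using q dnz by simp
  define s where "s = (d div 4) * q"
  have "y = 4 * s + 2 * q" unfolding s_def q by (subst d) (simp add: algebra_simps)
  hence "y mod 4 = (2 * q) mod 4" by simp
  also have "(2 * q) mod 4 = 2 * (q mod 2)" using mod_mult_mult1[of 2 q 2] by simp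
  finally have "(y mod 4) div 2 = q mod 2" by simp
  thus ?thesis using yq by simp
qed

lemma det_mod2_cong:
  fixes A B :: "int mat"
  assumes A: "A \<in> carrier_mat k k" and B: "B \<in> carrier_mat k k"
  and e: "\<And>i j. i < k \<Longrightarrow> j < k \<Longrightarrow> A $$ (i,j) mod 2 = B $$ (i,j) mod 2"
  shows "det A mod 2 = det B mod 2"
proof -
  have t: "(signof p * (\<Prod>i = 0..<k. A $$ (i, p i))) mod 2 = (signof p * (\<Prod>i = 0..<k. B $$ (i, p i))) mod 2"
    if p: "p permutes {0..<k}" for p
  proof -
    have pk: "p i < k" if "i < k" for i using permutes_in_image[OF p] that by simp
    have "(\<Prod>i = 0..<k. A $$ (i, p i)) mod 2 = (\<Prod>i = 0..<k. A $$ (i, p i) mod 2) mod 2"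
      by (simp add: mod_prod_eq)
    also have "(\<Prod>i = 0..<k. A $$ (i, p i) mod 2) = (\<Prod>i = 0..<k. B $$ (i, p i) mod 2)"
      by (rule prod.cong) (auto simp: e pk)
    also have "\<dots> mod 2 = (\<Prod>i = 0..<k. B $$ (i, p i)) mod 2"
      by (simp add: mod_prod_eq)
    finally show ?thesis by (rule mod_mult_cong[OF refl])
  qed
  have "det A mod 2 = (\<Sum>p\<in>{p. p permutes {0..<k}}. (signof p * (\<Prod>i = 0..<k. A $$ (i, p i))) mod 2) mod 2"
    by (simp add: det_def'[OF A] mod_sum_eq)
  also have "\<dots> = (\<Sum>p\<in>{p. p permutes {0..<k}}. (signof p * (\<Prod>i = 0..<k. B $$ (i, p i))) mod 2) mod 2"
    by (rule arg_cong[where f = "\<lambda>x. x mod 2"], rule sum.cong[OF refl], rule t) simp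
  also have "\<dots> = det B mod 2"
    by (simp add: det_def'[OF B] mod_sum_eq)
  finally show ?thesis .
qed

lemma odd_part:
  fixes a x :: "nat \<Rightarrow> int" and d :: int
  assumes dv: "\<And>i j. i \<ge> 1 \<Longrightarrow> d dvd a (i+j) - x i * a j"
  and d4: "d mod 4 = 2"
  and a0: "a 0 = 1"
  and aev: "\<And>j. j \<ge> 1 \<Longrightarrow> even (a j)"
  and xev: "\<And>i. even (x i)"
  and a4: "\<And>m. m \<ge> 2 \<Longrightarrow> a m mod 4 = (if pow2 m then 2 else 0)"
  shows "\<exists>q. hankel_det a n = d ^ n * q \<and> odd q"
proof -
  define A' where "A' = mat (Suc n) (Suc n) (\<lambda>(i,j). if i = 0 then a j else (a (i+j) - x i * a j) div d)"
  define B where "B = mat (Suc n) (Suc n) (\<lambda>(i,j). if i = 0 then (if j = 0 then 1 else 0)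
       else if j = 0 then A' $$ (i, 0) else (if pow2 (i+j) then 1 else (0::int)))"
  have H: "hankel_det a n = d ^ n * det A'" unfolding A'_def by (rule hankel_factor[OF dv])
  have Bodd: "odd (det B)"
    by (rule det_pattern_odd[of B n]) (auto simp: B_def)
  have ent: "A' $$ (i,j) mod 2 = B $$ (i,j) mod 2" if ij: "i < Suc n" "j < Suc n" for i j
  proof (cases "i = 0")
    case True
    thus ?thesis using ij a0 aev[of j] by (cases "j = 0") (auto simp: A'_def B_def)
  next
    case i0: False
    show ?thesis
    proof (cases "j = 0")
      case True thus ?thesis using ij i0 by (simp add: A'_def B_def)
    next
      case j0: False
      have dvy: "d dvd a (i+j) - x i * a j" using dv i0 by simp
      have "4 dvd x i * a j" using xev[of i] aev[of j] j0 by (auto elim!: evenE)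
      then obtain c where c: "x i * a j = 4 * c" by blast
      have y4: "(a (i+j) - x i * a j) mod 4 = a (i+j) mod 4"
        unfolding c using mod_mult_self1[of "a (i+j)" "-c" 4] by (simp add: algebra_simps)
      have "A' $$ (i,j) mod 2 = ((a (i+j) - x i * a j) mod 4) div 2"
        using ij i0 div_parity[OF d4 dvy] by (simp add: A'_def)
      also have "\<dots> = (if pow2 (i+j) then 1 else 0)" using y4 a4[of "i+j"] i0 j0 by simp
      finally show ?thesis using ij i0 j0 by (simp add: B_def)
    qed
  qed
  have cA: "A' \<in> carrier_mat (Suc n) (Suc n)" by (simp add: A'_def)
  have cB: "B \<in> carrier_mat (Suc n) (Suc n)" by (simp add: B_def)
  have "det A' mod 2 = det B mod 2" by (rule det_mod2_cong[OF cA cB ent])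
  hence "odd (det A')" using Bodd by (simp add: odd_iff_mod_2_eq_one)
  thus ?thesis using H by blast
qed

lemma franel_eq: "franel = franel_r 3"
  by (rule ext) (simp add: franel_def franel_r_def)

lemma franel_r_even: "r \<ge> 2 \<Longrightarrow> m \<ge> 1 \<Longrightarrow> even (franel_r r m)"
  using franel_r_mod4[of r m] by (cases "pow2 m") (auto dest!: mod_eq_dvd_iff[THEN iffD1] elim!: dvdE | presburger)+

lemma part_r:
  assumes r: "r \<ge> 2"
  shows "\<exists>q. hankel_det (franel_r r) n = 2 ^ n * q \<and> odd q"
proof (rule odd_part)
  fix i j :: nat assume "i \<ge> 1"
  thus "2 dvd franel_r r (i+j) - 0 * franel_r r j" using franel_r_even[OF r, of "i+j"] by simp
next
  show "franel_r r 0 = 1" by (rule franel_r_0)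
next
  fix j :: nat assume "j \<ge> 1" thus "even (franel_r r j)" by (rule franel_r_even[OF r])
next
  fix m :: nat assume "m \<ge> 2" thus "franel_r r m mod 4 = (if pow2 m then 2 else 0)"
    using franel_r_mod4[OF r] by simp
qed simp_all

lemma cube_mod3: "((c::int) ^ 3) mod 3 = c mod 3"
proof -
  have "c ^ 3 mod 3 = (c mod 3) ^ 3 mod 3" by (simp add: power_mod)
  moreover have "c mod 3 = 0 \<or> c mod 3 = 1 \<or> c mod 3 = 2" by presburger
  ultimately show ?thesis by auto
qed

lemma franel_mod3: "3 dvd franel m - (-1) ^ m"
proof -
  have "franel m mod 3 = (\<Sum>k\<le>m. int (m choose k) ^ 3 mod 3) mod 3"
    by (simp add: franel_def atLeast0AtMost mod_sum_eq)
  also have "\<dots> = (\<Sum>k\<le>m. int (m choose k) mod 3) mod 3" by (simp add: cube_mod3)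
  also have "\<dots> = (\<Sum>k\<le>m. int (m choose k)) mod 3" by (simp add: mod_sum_eq)
  also have "(\<Sum>k\<le>m. int (m choose k)) = 2 ^ m"
    using choose_row_sum[of m] by (metis of_nat_numeral of_nat_power of_nat_sum)
  also have "(2::int) ^ m mod 3 = ((-1) mod 3) ^ m mod 3" by simp
  also have "\<dots> = (-1) ^ m mod 3" by (rule power_mod)
  finally show ?thesis by (simp add: mod_eq_dvd_iff)
qed

lemma part_franel: "\<exists>q. hankel_det franel n = 6 ^ n * q \<and> odd q"
proof (rule odd_part[where x = "\<lambda>i. - 2 * (-1) ^ i"])
  fix i j :: nat assume i: "i \<ge> 1"
  have e1: "even (franel (i+j))" using franel_r_even[of 3 "i+j"] i by (simp add: franel_eq)
  have "2 dvd franel (i+j) + 2 * (-1)^i * franel j" using e1 by simp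
  moreover have "3 dvd franel (i+j) + 2 * (-1)^i * franel j"
  proof -
    obtain u where u: "franel (i+j) - (-1)^(i+j) = 3 * u" using franel_mod3 by blast
    obtain w where w: "franel j - (-1)^j = 3 * w" using franel_mod3 by blast
    have "franel (i+j) + 2 * (-1)^i * franel j = 3 * (u + 2 * (-1)^i * w + (-1)^(i+j))"
      using u w by (simp add: algebra_simps power_add)
    thus ?thesis by simp
  qed
  moreover have "\<And>y::int. 2 dvd y \<Longrightarrow> 3 dvd y \<Longrightarrow> 6 dvd y" by presburger
  ultimately have "6 dvd franel (i+j) + 2 * (-1)^i * franel j" by blast
  thus "6 dvd franel (i + j) - - 2 * (-1) ^ i * franel j" by simp
next
  show "franel 0 = 1" by (simp add: franel_def)
next
  fix j :: nat assume "j \<ge> 1" thus "even (franel j)" using franel_r_even[of 3 j] by (simp add: franel_eq)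
next
  fix m :: nat assume "m \<ge> 2" thus "franel m mod 4 = (if pow2 m then 2 else 0)"
    using franel_r_mod4[of 3 m] by (simp add: franel_eq)
qed simp_all

definition om :: "nat \<Rightarrow> complex" where "om N = cis (2 * pi / real N)"

lemma om_pow: "om N ^ a = cis (2 * pi * real a / real N)"
  by (simp add: om_def DeMoivre mult_ac)

lemma om_inj: assumes "0 < N" "i < N" "k < N" "om N ^ i = om N ^ k" shows "i = k"
proof -
  have "inj_on (\<lambda>k. cis (2 * pi * real k / real N)) {..<N}"
    using bij_betw_roots_unity[OF assms(1)] by (simp add: bij_betw_def)
  thus ?thesis using assms by (auto simp: om_pow dest: inj_onD)
qed

lemma om_N: "0 < N \<Longrightarrow> om N ^ N = 1"
  by (simp add: om_pow)

lemma om_cnj: "om N ^ a * cnj (om N ^ a) = 1"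
proof -
  have "cnj (om N ^ a) = inverse (om N ^ a)" by (simp add: om_pow cis_cnj)
  thus ?thesis by (simp add: om_pow cis_mult)
qed

lemma om_cnj': "om N ^ a * cnj (om N) ^ a = 1"
  using om_cnj[of N a] by simp

lemma orth:
  assumes N: "0 < N" and i: "i < N" and k: "k < N"
  shows "(\<Sum>a<N. (om N ^ a) ^ i * cnj (om N ^ a) ^ k) = (if i = k then of_nat N else 0)"
proof -
  define z where "z = om N ^ i * cnj (om N) ^ k"
  have za: "(om N ^ a) ^ i * cnj (om N ^ a) ^ k = z ^ a" for a
    by (simp add: z_def power_mult_distrib flip: power_mult) (simp add: mult.commute)
  have cw: "cnj (om N) ^ k * om N ^ k = 1" using om_cnj[of N k] by (simp add: mult.commute)
  have zN: "z ^ N = 1"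
  proof -
    have "z ^ N = (om N ^ N) ^ i * cnj (om N ^ N) ^ k"
      by (simp add: z_def power_mult_distrib flip: power_mult) (simp add: mult.commute)
    thus ?thesis using om_N[OF N] by simp
  qed
  show ?thesis
  proof (cases "i = k")
    case True
    hence "z = 1" using cw by (simp add: z_def mult.commute)
    thus ?thesis using za True by simp
  next
    case False
    have "z \<noteq> 1"
    proof
      assume "z = 1"
      hence "om N ^ i * (cnj (om N) ^ k * om N ^ k) = om N ^ k" by (simp add: z_def mult.assoc [symmetric])
      hence "om N ^ i = om N ^ k" using cw by simp
      thus False using om_inj[OF N i k] False by simp
    qed
    hence "(\<Sum>a<N. z ^ a) = 0" using zN by (simp add: geometric_sum)
    thus ?thesis using za False by simp
  qed
qed

lemma avg1:
  assumes N: "0 < N" and m: "m < N" and k: "k \<le> m"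
  shows "(\<Sum>a<N. \<Sum>j\<le>m. v j * ((om N ^ a) ^ j * cnj (om N ^ a) ^ k)) = of_nat N * v k"
proof -
  have "(\<Sum>a<N. \<Sum>j\<le>m. v j * ((om N ^ a) ^ j * cnj (om N ^ a) ^ k))
      = (\<Sum>j\<le>m. v j * (\<Sum>a<N. (om N ^ a) ^ j * cnj (om N ^ a) ^ k))"
    by (subst sum.swap) (simp add: sum_distrib_left)
  also have "\<dots> = (\<Sum>j\<le>m. v j * (if j = k then of_nat N else 0))"
    by (rule sum.cong[OF refl], subst orth[OF N]) (use m k in auto)
  also have "\<dots> = of_nat N * v k" using k by (simp add: if_distrib[of "\<lambda>x. _ * x"] cong: if_cong)
  finally show ?thesis .
qed

lemma avg2:
  assumes N: "0 < N" and m: "m < N"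
  shows "(\<Sum>a<N. \<Sum>i\<le>m. \<Sum>k\<le>m. u i k * ((om N ^ a) ^ i * cnj (om N ^ a) ^ k)) = of_nat N * (\<Sum>k\<le>m. u k k)"
proof -
  have "(\<Sum>a<N. \<Sum>i\<le>m. \<Sum>k\<le>m. u i k * ((om N ^ a) ^ i * cnj (om N ^ a) ^ k))
      = (\<Sum>k\<le>m. \<Sum>a<N. \<Sum>i\<le>m. u i k * ((om N ^ a) ^ i * cnj (om N ^ a) ^ k))"
    by (subst sum.swap[of _ "{..m}"], subst (2) sum.swap, simp)
  also have "\<dots> = (\<Sum>k\<le>m. of_nat N * u k k)"
    by (rule sum.cong[OF refl], rule avg1[OF N m]) simp
  finally show ?thesis by (simp add: sum_distrib_left)
qed

lemma binom1: "(1 + (z::'a::comm_semiring_1)) ^ m = (\<Sum>i\<le>m. of_nat (m choose i) * z ^ i)"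
  using binomial_ring[of z 1 m] by (simp add: add.commute)

lemma cube_identity:
  fixes x y u v :: complex
  assumes "x * u = 1" "y * v = 1"
  shows "(1 + u) * (1 + v) * (1 + x * y) = (1 + x) * (1 + y) * (1 + u * v)"
proof -
  have "(1 + u) * (1 + v) * (1 + x * y) - (1 + x) * (1 + y) * (1 + u * v) = (x*u - 1)*(y - v) + (y*v - 1)*(x - u)"
    by (simp add: algebra_simps)
  thus ?thesis using assms by simp
qed

lemma prod3:
  fixes f h :: "nat \<Rightarrow> 'a::comm_semiring_1"
  shows "sum f A * (sum h C * S) = (\<Sum>i\<in>A. \<Sum>k\<in>C. f i * (h k * S))"
proof -
  have 1: "sum h C * S = (\<Sum>k\<in>C. h k * S)" by (rule sum_distrib_right)
  show ?thesis unfolding 1 by (rule sum_product)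
qed

definition lam :: "nat \<Rightarrow> nat \<Rightarrow> nat \<Rightarrow> complex" where
  "lam N a b = (1 + om N ^ a) * (1 + om N ^ b) * (1 + cnj (om N ^ a) * cnj (om N ^ b))"

lemma lam_real: "cnj (lam N a b) = lam N a b"
proof -
  have "cnj (lam N a b) = (1 + cnj (om N ^ a)) * (1 + cnj (om N ^ b)) * (1 + om N ^ a * om N ^ b)"
    by (simp add: lam_def)
  also have "\<dots> = lam N a b" unfolding lam_def by (rule cube_identity) (simp_all add: om_cnj om_cnj')
  finally show ?thesis .
qed

lemma lam_expand:
  "lam N a b ^ m = (\<Sum>i\<le>m. \<Sum>k\<le>m. (of_nat (m choose i) * of_nat (m choose k)) * ((om N ^ a) ^ i * cnj (om N ^ a) ^ k) *
        (\<Sum>j\<le>m. of_nat (m choose j) * ((om N ^ b) ^ j * cnj (om N ^ b) ^ k)))" (is "_ = ?R")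
proof -
  let ?x = "om N ^ a" and ?y = "om N ^ b"
  have "lam N a b ^ m = (1 + ?x) ^ m * (1 + ?y) ^ m * (1 + cnj ?x * cnj ?y) ^ m"
    by (simp add: lam_def power_mult_distrib)
  also have "\<dots> = (\<Sum>i\<le>m. of_nat (m choose i) * ?x ^ i) * (\<Sum>j\<le>m. of_nat (m choose j) * ?y ^ j)
       * (\<Sum>k\<le>m. of_nat (m choose k) * (cnj ?x ^ k * cnj ?y ^ k))"
    by (simp only: binom1 power_mult_distrib)
  also have "\<dots> = (\<Sum>i\<le>m. of_nat (m choose i) * ?x ^ i) * ((\<Sum>k\<le>m. of_nat (m choose k) * (cnj ?x ^ k * cnj ?y ^ k)) * (\<Sum>j\<le>m. of_nat (m choose j) * ?y ^ j))"
    by (simp only: ac_simps)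
  also have "\<dots> = (\<Sum>i\<le>m. \<Sum>k\<le>m. (of_nat (m choose i) * ?x ^ i) * ((of_nat (m choose k) * (cnj ?x ^ k * cnj ?y ^ k)) * (\<Sum>j\<le>m. of_nat (m choose j) * ?y ^ j)))"
    by (rule prod3)
  also have "\<dots> = ?R"
    by (intro sum.cong refl) (simp add: sum_distrib_left mult_ac)
  finally show ?thesis .
qed

lemma swap3: "(\<Sum>b\<in>B. \<Sum>i\<in>I. \<Sum>k\<in>K. F b i k) = (\<Sum>i\<in>I. \<Sum>k\<in>K. \<Sum>b\<in>B. F b i k)"
  by (subst sum.swap, rule sum.cong[OF refl], rule sum.swap)

lemma swap4: "(\<Sum>i\<in>I. \<Sum>j\<in>J. \<Sum>a\<in>A. \<Sum>b\<in>B. F i j a b) = (\<Sum>a\<in>A. \<Sum>b\<in>B. \<Sum>i\<in>I. \<Sum>j\<in>J. F i j a b)"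
proof -
  have "(\<Sum>i\<in>I. \<Sum>j\<in>J. \<Sum>a\<in>A. \<Sum>b\<in>B. F i j a b) = (\<Sum>i\<in>I. \<Sum>a\<in>A. \<Sum>b\<in>B. \<Sum>j\<in>J. F i j a b)"
    by (rule sum.cong[OF refl], rule swap3)
  also have "\<dots> = (\<Sum>a\<in>A. \<Sum>b\<in>B. \<Sum>i\<in>I. \<Sum>j\<in>J. F i j a b)" by (rule swap3)
  finally show ?thesis .
qed

lemma angle_le_pi: assumes "2 * a \<le> N" "0 < N" shows "2 * pi * real a / real N \<le> pi"
proof -
  have "2 * real a \<le> real N" using assms by simp
  hence "2 * real a * pi \<le> real N * pi" by (rule mult_right_mono) simp
  thus ?thesis using assms by (simp add: divide_le_eq mult_ac)
qed

lemma franel_rep: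
  assumes N: "0 < N" and m: "m < N"
  shows "(\<Sum>a<N. \<Sum>b<N. lam N a b ^ m) = of_nat N ^ 2 * of_int (franel m)"
proof -
  define c where "c i = (of_nat (m choose i) :: complex)" for i
  define X where "X a i k = (om N ^ a) ^ i * cnj (om N ^ a) ^ k" for a i k
  have inner: "(\<Sum>b<N. lam N a b ^ m) = (\<Sum>i\<le>m. \<Sum>k\<le>m. (c i * c k * (of_nat N * c k)) * X a i k)" for a
  proof -
    have "(\<Sum>b<N. lam N a b ^ m) = (\<Sum>b<N. \<Sum>i\<le>m. \<Sum>k\<le>m. (c i * c k) * X a i k *
        (\<Sum>j\<le>m. c j * ((om N ^ b) ^ j * cnj (om N ^ b) ^ k)))"
      by (simp only: lam_expand c_def X_def)
    also have "\<dots> = (\<Sum>i\<le>m. \<Sum>k\<le>m. \<Sum>b<N. (c i * c k) * X a i k *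
        (\<Sum>j\<le>m. c j * ((om N ^ b) ^ j * cnj (om N ^ b) ^ k)))"
      by (rule swap3)
    also have "\<dots> = (\<Sum>i\<le>m. \<Sum>k\<le>m. (c i * c k) * X a i k *
        (\<Sum>b<N. \<Sum>j\<le>m. c j * ((om N ^ b) ^ j * cnj (om N ^ b) ^ k)))"
      by (simp only: sum_distrib_left)
    also have "\<dots> = (\<Sum>i\<le>m. \<Sum>k\<le>m. (c i * c k) * X a i k * (of_nat N * c k))"
      by (intro sum.cong refl) (subst avg1[OF N m], auto)
    also have "\<dots> = (\<Sum>i\<le>m. \<Sum>k\<le>m. (c i * c k * (of_nat N * c k)) * X a i k)"
      by (intro sum.cong refl) (simp only: mult_ac)
    finally show ?thesis .
  qed
  have "(\<Sum>a<N. \<Sum>b<N. lam N a b ^ m) = (\<Sum>a<N. \<Sum>i\<le>m. \<Sum>k\<le>m. (c i * c k * (of_nat N * c k)) * X a i k)"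
    by (simp only: inner)
  also have "\<dots> = of_nat N * (\<Sum>k\<le>m. c k * c k * (of_nat N * c k))"
    unfolding X_def by (rule avg2[OF N m])
  also have "(\<Sum>k\<le>m. c k * c k * (of_nat N * c k)) = of_nat N * (\<Sum>k\<le>m. c k ^ 3)"
    by (simp add: sum_distrib_left power3_eq_cube mult_ac)
  also have "of_nat N * (of_nat N * (\<Sum>k\<le>m. c k ^ 3)) = of_nat N ^ 2 * (\<Sum>k\<le>m. c k ^ 3)"
    by (simp add: power2_eq_square)
  also have "(\<Sum>k\<le>m. c k ^ 3) = of_int (franel m)"
    by (simp add: c_def franel_def atLeast0AtMost)
  finally show ?thesis .
qed

definition mu :: "nat \<Rightarrow> nat \<Rightarrow> nat \<Rightarrow> real" where "mu N a b = Re (lam N a b)"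

lemma lam_of_real: "lam N a b = of_real (mu N a b)"
proof -
  have "Im (lam N a b) = 0" using lam_real[of N a b] by (metis cnj.sel(2) equal_neg_zero)
  thus ?thesis by (simp add: mu_def complex_eq_iff)
qed

lemma franel_rep_real:
  assumes N: "0 < N" and m: "m < N"
  shows "real_of_int (franel m) = (\<Sum>a<N. \<Sum>b<N. mu N a b ^ m) / real N ^ 2"
proof -
  have "complex_of_real (\<Sum>a<N. \<Sum>b<N. mu N a b ^ m) = complex_of_real (real N ^ 2 * real_of_int (franel m))"
    using franel_rep[OF N m] by (simp add: lam_of_real)
  hence "(\<Sum>a<N. \<Sum>b<N. mu N a b ^ m) = real N ^ 2 * real_of_int (franel m)" by (rule of_real_eq_iff[THEN iffD1])
  thus ?thesis using N by (simp add: field_simps)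
qed

lemma mu_a0: "mu N a 0 = 4 + 4 * cos (2 * pi * real a / real N)"
proof -
  define x where "x = om N ^ a"
  have x: "x = cis (2 * pi * real a / real N)" by (simp add: x_def om_pow)
  have xc: "x * cnj x = 1" by (simp add: x_def om_cnj om_cnj')
  have xs: "x + cnj x = of_real (2 * cos (2 * pi * real a / real N))" by (simp add: x complex_add_cnj)
  have "lam N a 0 = 2 * (1 + x + cnj x + x * cnj x)" by (simp add: lam_def x_def algebra_simps)
  hence "lam N a 0 = 2 * (2 + (x + cnj x))" using xc by (simp add: algebra_simps)
  hence "lam N a 0 = 2 * (2 + of_real (2 * cos (2 * pi * real a / real N)))" using xs by simp
  thus ?thesis by (simp add: mu_def)
qed

lemma distr4: "(x::real) * ((\<Sum>a\<in>A. \<Sum>b\<in>B. f a b) / c) * y = (\<Sum>a\<in>A. \<Sum>b\<in>B. x * f a b * y / c)"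
  by (simp add: sum_distrib_left sum_distrib_right sum_divide_distrib)

lemma qform:
  assumes N: "2 * n < N"
  shows "(\<Sum>i\<le>n. \<Sum>j\<le>n. v i * real_of_int (franel (i+j)) * v j)
       = (\<Sum>a<N. \<Sum>b<N. (\<Sum>i\<le>n. v i * mu N a b ^ i) ^ 2) / real N ^ 2"
proof -
  have N0: "0 < N" using N by simp
  have "(\<Sum>i\<le>n. \<Sum>j\<le>n. v i * real_of_int (franel (i+j)) * v j)
      = (\<Sum>i\<le>n. \<Sum>j\<le>n. v i * ((\<Sum>a<N. \<Sum>b<N. mu N a b ^ (i+j)) / real N ^ 2) * v j)"
    by (intro sum.cong refl) (subst franel_rep_real[OF N0], use N in auto)
  also have "\<dots> = (\<Sum>i\<le>n. \<Sum>j\<le>n. \<Sum>a<N. \<Sum>b<N. (v i * mu N a b ^ i) * (v j * mu N a b ^ j) / real N ^ 2)"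
    by (intro sum.cong refl) (subst distr4, simp only: power_add mult_ac)
  also have "\<dots> = (\<Sum>a<N. \<Sum>b<N. \<Sum>i\<le>n. \<Sum>j\<le>n. (v i * mu N a b ^ i) * (v j * mu N a b ^ j) / real N ^ 2)"
    by (rule swap4)
  also have "\<dots> = (\<Sum>a<N. \<Sum>b<N. (\<Sum>i\<le>n. v i * mu N a b ^ i) ^ 2 / real N ^ 2)"
    by (intro sum.cong refl) (simp only: power2_eq_square sum_product sum_divide_distrib)
  also have "\<dots> = (\<Sum>a<N. \<Sum>b<N. (\<Sum>i\<le>n. v i * mu N a b ^ i) ^ 2) / real N ^ 2"
    by (simp add: sum_divide_distrib)
  finally show ?thesis .
qed

lemma poly_nonvanish:
  fixes v :: "nat \<Rightarrow> real"
  assumes nz: "\<exists>i\<le>n. v i \<noteq> 0"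
  and inj: "inj_on t {..n}"
  shows "\<exists>a\<le>n. (\<Sum>i\<le>n. v i * t a ^ i) \<noteq> 0"
proof (rule ccontr)
  assume "\<not> ?thesis"
  hence z: "\<And>a. a \<le> n \<Longrightarrow> (\<Sum>i\<le>n. v i * t a ^ i) = 0" by auto
  define p where "p = (\<Sum>i\<le>n. monom (v i) i)"
  have pe: "poly p x = (\<Sum>i\<le>n. v i * x ^ i)" for x by (simp add: p_def poly_sum poly_monom)
  have pc: "coeff p i = v i" if "i \<le> n" for i
    using that by (simp add: p_def coeff_sum)
  have p0: "p \<noteq> 0" using nz pc by (metis coeff_0)
  have deg: "degree p \<le> n" unfolding p_def by (rule degree_sum_le) (auto intro: order.trans[OF degree_monom_le])
  have "t ` {..n} \<subseteq> {x. poly p x = 0}" using z pe by auto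
  hence "card (t ` {..n}) \<le> card {x. poly p x = 0}"
    by (intro card_mono poly_roots_finite[OF p0])
  also have "\<dots> \<le> degree p" by (rule card_poly_roots_bound[OF p0])
  also have "card (t ` {..n}) = Suc n" using card_image[OF inj] by simp
  finally show False using deg by simp
qed

lemma qform_pos:
  fixes v :: "nat \<Rightarrow> real"
  assumes nz: "\<exists>i\<le>n. v i \<noteq> 0"
  shows "(\<Sum>i\<le>n. \<Sum>j\<le>n. v i * real_of_int (franel (i+j)) * v j) > 0"
proof -
  define N where "N = Suc (2*n)"
  have N: "2 * n < N" by (simp add: N_def)
  define t where "t a = mu N a 0" for a
  have inj: "inj_on t {..n}"
  proof (rule inj_onI)
    fix a b assume ab: "a \<in> {..n}" "b \<in> {..n}" "t a = t b"
    have N0: "0 < N" by (simp add: N_def)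
    have c: "cos (2 * pi * real a / real N) = cos (2 * pi * real b / real N)"
      using ab(3) by (simp add: t_def mu_a0)
    have la: "2 * pi * real a / real N \<le> pi" by (rule angle_le_pi) (use ab(1) in \<open>auto simp: N_def\<close>)
    have lb: "2 * pi * real b / real N \<le> pi" by (rule angle_le_pi) (use ab(2) in \<open>auto simp: N_def\<close>)
    have ga: "0 \<le> 2 * pi * real a / real N" by simp
    have gb: "0 \<le> 2 * pi * real b / real N" by simp
    have "2 * pi * real a / real N = 2 * pi * real b / real N" by (rule cos_inj_pi[OF ga la gb lb c])
    hence "real a = real b" using N0 by simp
    thus "a = b" by simp
  qed
  obtain a where a: "a \<le> n" "(\<Sum>i\<le>n. v i * t a ^ i) \<noteq> 0" using poly_nonvanish[OF nz inj] by blast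
  have aN: "a < N" "0 < N" using a N by auto
  have "0 < (\<Sum>i\<le>n. v i * mu N a 0 ^ i) ^ 2" using a by (simp add: t_def)
  also have "\<dots> \<le> (\<Sum>b<N. (\<Sum>i\<le>n. v i * mu N a b ^ i) ^ 2)"
    by (rule member_le_sum[of 0]) (use aN in auto)
  also have "\<dots> \<le> (\<Sum>a<N. \<Sum>b<N. (\<Sum>i\<le>n. v i * mu N a b ^ i) ^ 2)"
    by (rule member_le_sum[of a, where f = "\<lambda>a. \<Sum>b<N. (\<Sum>i\<le>n. v i * mu N a b ^ i) ^ 2"])
       (use aN in \<open>auto intro: sum_nonneg\<close>)
  finally have "0 < (\<Sum>a<N. \<Sum>b<N. (\<Sum>i\<le>n. v i * mu N a b ^ i) ^ 2) / real N ^ 2"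
    using aN by simp
  thus ?thesis using qform[OF N] by simp
qed

lemma pd_det_pos:
  fixes M :: "real mat"
  assumes M: "M \<in> carrier_mat k k"
  and pd: "\<And>v. (\<exists>i<k. v i \<noteq> 0) \<Longrightarrow> (\<Sum>i<k. \<Sum>j<k. v i * M $$ (i,j) * v j) > 0"
  shows "det M > 0"
proof -
  define Mt where "Mt t = mat k k (\<lambda>(i,j). t * M $$ (i,j) + (1 - t) * (if i = j then 1 else 0))" for t :: real
  have Mtc: "Mt t \<in> carrier_mat k k" for t by (simp add: Mt_def)
  have nz: "det (Mt t) \<noteq> 0" if t: "0 \<le> t" "t \<le> 1" for t
  proof
    assume "det (Mt t) = 0"
    then obtain v where v: "v \<in> carrier_vec k" "v \<noteq> 0\<^sub>v k" "Mt t *\<^sub>v v = 0\<^sub>v k"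
      using det_0_iff_vec_prod_zero[OF Mtc] by blast
    define w where "w i = v $ i" for i
    have ex: "\<exists>i<k. w i \<noteq> 0"
    proof (rule ccontr)
      assume "\<not> ?thesis"
      hence "v = 0\<^sub>v k" using v(1) by (intro eq_vecI) (auto simp: w_def)
      thus False using v(2) by simp
    qed
    have rowz: "(\<Sum>j<k. (t * M $$ (i,j) + (1 - t) * (if i = j then 1 else 0)) * w j) = 0" if i: "i < k" for i
    proof -
      have "(Mt t *\<^sub>v v) $ i = 0" using v(3) i by simp
      moreover have "(Mt t *\<^sub>v v) $ i = (\<Sum>j<k. (t * M $$ (i,j) + (1 - t) * (if i = j then 1 else 0)) * w j)"
        using i v(1) by (simp add: Mt_def scalar_prod_def w_def lessThan_atLeast0)
      ultimately show ?thesis by simp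
    qed
    have "(\<Sum>i<k. w i * (\<Sum>j<k. (t * M $$ (i,j) + (1 - t) * (if i = j then 1 else 0)) * w j)) = 0"
      by (simp add: rowz)
    moreover have "(\<Sum>i<k. w i * (\<Sum>j<k. (t * M $$ (i,j) + (1 - t) * (if i = j then 1 else 0)) * w j))
       = t * (\<Sum>i<k. \<Sum>j<k. w i * M $$ (i,j) * w j) + (1 - t) * (\<Sum>i<k. w i * w i)"
    proof -
      have "(\<Sum>i<k. w i * (\<Sum>j<k. (t * M $$ (i,j) + (1 - t) * (if i = j then 1 else 0)) * w j))
          = (\<Sum>i<k. t * (\<Sum>j<k. w i * M $$ (i,j) * w j) + (1 - t) * (w i * w i))"
      proof (rule sum.cong[OF refl])
        fix i assume i: "i \<in> {..<k}"
        have "w i * (\<Sum>j<k. (t * M $$ (i,j) + (1 - t) * (if i = j then 1 else 0)) * w j)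
            = (\<Sum>j<k. t * (w i * M $$ (i,j) * w j) + (if i = j then (1 - t) * (w i * w i) else 0))"
          by (simp add: sum_distrib_left) (intro sum.cong refl, auto simp: algebra_simps)
        also have "\<dots> = t * (\<Sum>j<k. w i * M $$ (i,j) * w j) + (1 - t) * (w i * w i)"
          using i by (simp add: sum.distrib sum_distrib_left)
        finally show "w i * (\<Sum>j<k. (t * M $$ (i,j) + (1 - t) * (if i = j then 1 else 0)) * w j)
            = t * (\<Sum>j<k. w i * M $$ (i,j) * w j) + (1 - t) * (w i * w i)" .
      qed
      also have "\<dots> = t * (\<Sum>i<k. \<Sum>j<k. w i * M $$ (i,j) * w j) + (1 - t) * (\<Sum>i<k. w i * w i)"
        by (simp add: sum.distrib sum_distrib_left)
      finally show ?thesis .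
    qed
    moreover have "t * (\<Sum>i<k. \<Sum>j<k. w i * M $$ (i,j) * w j) + (1 - t) * (\<Sum>i<k. w i * w i) > 0"
    proof -
      have Q: "(\<Sum>i<k. \<Sum>j<k. w i * M $$ (i,j) * w j) > 0" by (rule pd[OF ex])
      obtain i0 where i0: "i0 < k" "w i0 \<noteq> 0" using ex by blast
      have S: "(\<Sum>i<k. w i * w i) > 0"
        by (rule sum_pos2[of _ i0]) (use i0 in \<open>auto simp: zero_less_mult_iff linorder_neq_iff\<close>)
      show ?thesis
      proof (cases "t = 0")
        case True thus ?thesis using S by simp
      next
        case False
        hence "t > 0" using t by simp
        hence "t * (\<Sum>i<k. \<Sum>j<k. w i * M $$ (i,j) * w j) > 0" using Q by simp
        moreover have "(1 - t) * (\<Sum>i<k. w i * w i) \<ge> 0" using t S by simp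
        ultimately show ?thesis by simp
      qed
    qed
    ultimately show False by simp
  qed
  have detf: "det (Mt t) = (\<Sum>p\<in>{p. p permutes {0..<k}}. signof p *
      (\<Prod>i = 0..<k. t * M $$ (i, p i) + (1 - t) * (if i = p i then 1 else 0)))" for t
  proof -
    have "det (Mt t) = (\<Sum>p\<in>{p. p permutes {0..<k}}. signof p * (\<Prod>i = 0..<k. Mt t $$ (i, p i)))"
      by (rule det_def'[OF Mtc])
    also have "\<dots> = (\<Sum>p\<in>{p. p permutes {0..<k}}. signof p *
      (\<Prod>i = 0..<k. t * M $$ (i, p i) + (1 - t) * (if i = p i then 1 else 0)))"
    proof (rule sum.cong[OF refl])
      fix p assume "p \<in> {p. p permutes {0..<k}}"
      hence pk: "\<And>i. i < k \<Longrightarrow> p i < k" using permutes_in_image by fastforce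
      show "signof p * (\<Prod>i = 0..<k. Mt t $$ (i, p i)) = signof p *
        (\<Prod>i = 0..<k. t * M $$ (i, p i) + (1 - t) * (if i = p i then 1 else 0))"
        by (rule arg_cong[where f = "\<lambda>x. signof p * x"], rule prod.cong[OF refl]) (simp add: Mt_def pk)
    qed
    finally show ?thesis .
  qed
  have cont: "continuous_on {0..1} (\<lambda>t. det (Mt t))"
    unfolding detf by (intro continuous_intros)
  have M0: "Mt 0 = 1\<^sub>m k" by (rule eq_matI) (auto simp: Mt_def)
  have M1: "Mt 1 = M" by (rule eq_matI) (use M in \<open>auto simp: Mt_def\<close>)
  show ?thesis
  proof (rule ccontr)
    assume "\<not> det M > 0"
    hence "det (Mt 1) \<le> 0" using M1 by simp
    moreover have "0 \<le> det (Mt 0)" using M0 by simp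
    ultimately obtain t where "0 \<le> t" "t \<le> 1" "det (Mt t) = 0"
      using IVT2'[of "\<lambda>t. det (Mt t)" 1 0 0] cont by auto
    thus False using nz by blast
  qed
qed

lemma franel_hankel_pos: "hankel_det franel n > 0"
proof -
  define H where "H = mat (n+1) (n+1) (\<lambda>(i,j). franel (i+j))"
  define M where "M = mat (Suc n) (Suc n) (\<lambda>(i,j). real_of_int (franel (i+j)))"
  have MH: "M = map_mat real_of_int H" by (rule eq_matI) (auto simp: M_def H_def)
  have "det M > 0"
  proof (rule pd_det_pos[of M "Suc n"])
    show "M \<in> carrier_mat (Suc n) (Suc n)" by (simp add: M_def)
  next
    fix v :: "nat \<Rightarrow> real" assume "\<exists>i<Suc n. v i \<noteq> 0"
    hence nz: "\<exists>i\<le>n. v i \<noteq> 0" by (auto simp: less_Suc_eq_le)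
    have "(\<Sum>i<Suc n. \<Sum>j<Suc n. v i * M $$ (i,j) * v j) = (\<Sum>i\<le>n. \<Sum>j\<le>n. v i * real_of_int (franel (i+j)) * v j)"
      by (simp add: lessThan_Suc_atMost M_def)
    thus "(\<Sum>i<Suc n. \<Sum>j<Suc n. v i * M $$ (i,j) * v j) > 0" using qform_pos[OF nz] by simp
  qed
  moreover have "det M = real_of_int (hankel_det franel n)"
    unfolding MH hankel_det_def H_def by (rule of_int_hom.hom_det)
  ultimately show ?thesis by simp
qed

theorem theorem1p1:
  fixes n r :: nat
  assumes "r \<ge> 3"
  shows "((2::int) ^ n dvd hankel_det (franel_r r) n
           \<and> odd (hankel_det (franel_r r) n div 2 ^ n))
       \<and> ((6::int) ^ n dvd hankel_det franel n
           \<and> hankel_det franel n div 6 ^ n > 0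
           \<and> odd (hankel_det franel n div 6 ^ n))"
proof -
  have r2: "r \<ge> 2" using assms by simp
  obtain q where q: "hankel_det (franel_r r) n = 2 ^ n * q" "odd q" using part_r[OF r2] by blast
  obtain q' where q': "hankel_det franel n = 6 ^ n * q'" "odd q'" using part_franel by blast
  have pos: "hankel_det franel n > 0" by (rule franel_hankel_pos)
  have "q' > 0" using pos q'(1) by (simp add: zero_less_mult_iff)
  thus ?thesis using q q' by simp
qed

end
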